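(* For every positive integer $n$, the number of ordered set partitions of $[n]$ into exactly $3$ blocks that avoid the pattern $123$ is $$\operatorname{op}_{n,3}(123) = \left(\frac{n^2}{8}+\frac{3n}{8}-2\right)2^n+3.$$
   Context: An ordered set partition of $[n]$ into $k$ blocks is a sequence $B_1/B_2/\cdots/B_k$ of nonempty, pairwise disjoint subsets of $[n]$ whose union is $[n]$; the order of the blocks matters, but not the order of elements within a block. For a permutation $\rho=\rho_1\cdots\rho_m\in\mathcal{S}_m$, an ordered partition $B_1/\cdots/B_k$ contains $\rho$ if there are block indices $i_1<i_2<\cdots<i_m$ and elements $b_j\in B_{i_j}$ such that $b_1\cdots b_m$ is order-isomorphic to $\rho$ (i.e. $b_a<b_c$ iff $\rho_a<\rho_c$); otherwise it avoids $\rho$. $\operatorname{op}_{n,k}(\rho)$ denotes the number of ordered partitions of $[n]$ into $k$ blocks that avoid $\rho$. *)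

theory Defs
  imports Complex_Main
begin

definition ordered_set_partitions :: "nat \<Rightarrow> nat \<Rightarrow> nat set list set" where
  "ordered_set_partitions n k =
     {Bs. length Bs = k \<and> (\<forall>B\<in>set Bs. B \<noteq> {}) \<and>
          (\<forall>i<k. \<forall>j<k. i \<noteq> j \<longrightarrow> Bs ! i \<inter> Bs ! j = {}) \<and>
          \<Union>(set Bs) = {1..n}}"

definition osp_contains :: "nat set list \<Rightarrow> nat list \<Rightarrow> bool" where
  "osp_contains Bs rho \<longleftrightarrow>
     (\<exists>idx b :: nat \<Rightarrow> nat.
        (\<forall>j<length rho. idx j < length Bs \<and> b j \<in> Bs ! (idx j)) \<and>
        (\<forall>a<length rho. \<forall>c<length rho. a < c \<longrightarrow> idx a < idx c) \<and>
        (\<forall>a<length rho. \<forall>c<length rho. b a < b c \<longleftrightarrow> rho ! a < rho ! c))"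

definition op_count :: "nat \<Rightarrow> nat \<Rightarrow> nat list \<Rightarrow> nat" where
  "op_count n k rho = card {Bs \<in> ordered_set_partitions n k. \<not> osp_contains Bs rho}"

end

theory Submission
  imports Defs
begin

definition cnt :: "nat \<Rightarrow> (nat list \<Rightarrow> bool) \<Rightarrow> nat" where
  "cnt n Q = card {w. length w = n \<and> set w \<subseteq> {0,1,2} \<and> Q w}"

lemma fin_words: "finite {w::nat list. length w = n \<and> set w \<subseteq> {0,1,2} \<and> Q w}"
proof -
  have "finite {w::nat list. set w \<subseteq> {0,1,2} \<and> length w = n}"
    by (rule finite_lists_length_eq) simp
  then show ?thesis by (rule rev_finite_subset) auto
qed

lemma cnt_Suc: "cnt (Suc n) Q = cnt n (\<lambda>w. Q (0#w)) + cnt n (\<lambda>w. Q (1#w)) + cnt n (\<lambda>w. Q (2#w))"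
proof -
  let ?W = "\<lambda>a. {w::nat list. length w = n \<and> set w \<subseteq> {0,1,2} \<and> Q (a#w)}"
  have eq: "{w. length w = Suc n \<and> set w \<subseteq> {0,1,2} \<and> Q w} = (\<Union>a\<in>{0,1,2}. Cons a ` ?W a)"
    (is "?L = ?R")
  proof
    show "?L \<subseteq> ?R"
    proof
      fix w assume "w \<in> ?L"
      then obtain a v where w: "w = a # v" by (cases w) auto
      with \<open>w \<in> ?L\<close> show "w \<in> ?R" by auto
    qed
  qed auto
  have fin: "\<And>P. finite {w::nat list. length w = n \<and> set w \<subseteq> {0, Suc 0, 2} \<and> P w}"
    using fin_words by simp
  have "card ?L = (\<Sum>a\<in>{0,1,2}. card (Cons a ` ?W a))"
    unfolding eq by (rule card_UN_disjoint) (auto intro!: finite_imageI fin)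
  also have "\<dots> = (\<Sum>a\<in>{0::nat,1,2}. card (?W a))"
    by (rule sum.cong) (auto intro: card_image)
  finally show ?thesis unfolding cnt_def by simp
qed

lemma cnt_cong: "(\<And>w. set w \<subseteq> {0,1,2} \<Longrightarrow> Q w = R w) \<Longrightarrow> cnt n Q = cnt n R"
  unfolding cnt_def by (rule arg_cong[where f=card]) auto

lemma cnt_False: "cnt n (\<lambda>w. False) = 0" unfolding cnt_def by simp
lemma cnt_0: "cnt 0 Q = (if Q [] then 1 else 0)"
proof -
  have "{w::nat list. length w = 0 \<and> set w \<subseteq> {0,1,2} \<and> Q w} = (if Q [] then {[]} else {})" by auto
  then show ?thesis unfolding cnt_def by simp
qed

fun P12 :: "nat list \<Rightarrow> bool" where
  "P12 [] = False" | "P12 (a#w) = ((a = 1 \<and> 2 \<in> set w) \<or> P12 w)"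
fun P012 :: "nat list \<Rightarrow> bool" where
  "P012 [] = False" | "P012 (a#w) = ((a = 0 \<and> P12 w) \<or> P012 w)"

lemma P12_2: "P12 w \<Longrightarrow> 2 \<in> set w" by (induction w) auto
lemma P012_12: "P012 w \<Longrightarrow> P12 w" by (induction w) auto


lemma cnt_Suc3:
  assumes "\<And>w. set w \<subseteq> {0,1,2} \<Longrightarrow> Q (0#w) = A w"
      and "\<And>w. set w \<subseteq> {0,1,2} \<Longrightarrow> Q (1#w) = B w"
      and "\<And>w. set w \<subseteq> {0,1,2} \<Longrightarrow> Q (2#w) = C w"
  shows "cnt (Suc n) Q = cnt n A + cnt n B + cnt n C"
  unfolding cnt_Suc using cnt_cong[OF assms(1)] cnt_cong[OF assms(2)] cnt_cong[OF assms(3)] by simp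

lemma Z: "cnt n (\<lambda>w. 2 \<notin> set w) = 2^n"
proof (induction n)
  case 0 then show ?case by (simp add: cnt_0)
next
  case (Suc n)
  have "cnt (Suc n) (\<lambda>w. 2 \<notin> set w) = cnt n (\<lambda>w. 2 \<notin> set w) + cnt n (\<lambda>w. 2 \<notin> set w) + cnt n (\<lambda>w. False)"
    by (rule cnt_Suc3) auto
  then show ?case using Suc by (simp add: cnt_False)
qed

lemma Yall: "real (cnt n (\<lambda>w. \<not> P12 w)) = (real n + 2) * 2^n / 2"
proof (induction n)
  case 0 then show ?case by (simp add: cnt_0)
next
  case (Suc n)
  have "cnt (Suc n) (\<lambda>w. \<not> P12 w) = cnt n (\<lambda>w. \<not> P12 w) + cnt n (\<lambda>w. 2 \<notin> set w) + cnt n (\<lambda>w. \<not> P12 w)"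
    by (rule cnt_Suc3) (auto dest: P12_2)
  then show ?case using Suc by (simp add: Z field_simps)
qed

lemma Y1: "real (cnt n (\<lambda>w. \<not> P12 w \<and> 1 \<in> set w)) = real n * 2^n / 2"
proof (induction n)
  case 0 then show ?case by (simp add: cnt_0)
next
  case (Suc n)
  have "cnt (Suc n) (\<lambda>w. \<not> P12 w \<and> 1 \<in> set w) = cnt n (\<lambda>w. \<not> P12 w \<and> 1 \<in> set w) + cnt n (\<lambda>w. 2 \<notin> set w) + cnt n (\<lambda>w. \<not> P12 w \<and> 1 \<in> set w)"
    by (rule cnt_Suc3) (auto dest: P12_2)
  then show ?case using Suc by (simp add: Z field_simps)
qed

lemma Y2: "real (cnt n (\<lambda>w. \<not> P12 w \<and> 2 \<in> set w)) = real n * 2^n / 2"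
proof (induction n)
  case 0 then show ?case by (simp add: cnt_0)
next
  case (Suc n)
  have "cnt (Suc n) (\<lambda>w. \<not> P12 w \<and> 2 \<in> set w) = cnt n (\<lambda>w. \<not> P12 w \<and> 2 \<in> set w) + cnt n (\<lambda>w. False) + cnt n (\<lambda>w. \<not> P12 w)"
    by (rule cnt_Suc3) (auto dest: P12_2)
  then show ?case using Suc by (simp add: Yall cnt_False field_simps)
qed

lemma Y12: "real (cnt n (\<lambda>w. \<not> P12 w \<and> 1 \<in> set w \<and> 2 \<in> set w)) = (real n - 2) * 2^n / 2 + 1"
proof (induction n)
  case 0 then show ?case by (simp add: cnt_0)
next
  case (Suc n)
  have "cnt (Suc n) (\<lambda>w. \<not> P12 w \<and> 1 \<in> set w \<and> 2 \<in> set w) = cnt n (\<lambda>w. \<not> P12 w \<and> 1 \<in> set w \<and> 2 \<in> set w) + cnt n (\<lambda>w. False) + cnt n (\<lambda>w. \<not> P12 w \<and> 1 \<in> set w)"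
    by (rule cnt_Suc3) (auto dest: P12_2)
  then show ?case using Suc Y1[of n] by (simp add: cnt_False field_simps)
qed

lemma X0': "real (cnt n (\<lambda>w. \<not> P012 w \<and> 0 \<in> set w)) = 2^n * (real n / 2 + real n * (real n - 1) / 8)"
proof (induction n)
  case 0 then show ?case by (simp add: cnt_0)
next
  case (Suc n)
  have "cnt (Suc n) (\<lambda>w. \<not> P012 w \<and> 0 \<in> set w) = cnt n (\<lambda>w. \<not> P12 w) + cnt n (\<lambda>w. \<not> P012 w \<and> 0 \<in> set w) + cnt n (\<lambda>w. \<not> P012 w \<and> 0 \<in> set w)"
    by (rule cnt_Suc3) (auto dest: P012_12)
  then show ?case using Suc by (simp add: Yall field_simps)
qed

lemma X01: "real (cnt n (\<lambda>w. \<not> P012 w \<and> 0 \<in> set w \<and> 1 \<in> set w)) = 2^n * (real n / 2 + real n * (real n - 1) / 8) - 2^n + 1"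
proof (induction n)
  case 0 then show ?case by (simp add: cnt_0)
next
  case (Suc n)
  have "cnt (Suc n) (\<lambda>w. \<not> P012 w \<and> 0 \<in> set w \<and> 1 \<in> set w) = cnt n (\<lambda>w. \<not> P12 w \<and> 1 \<in> set w) + cnt n (\<lambda>w. \<not> P012 w \<and> 0 \<in> set w) + cnt n (\<lambda>w. \<not> P012 w \<and> 0 \<in> set w \<and> 1 \<in> set w)"
    by (rule cnt_Suc3) (auto dest: P012_12)
  then show ?case using Suc Y1[of n] X0'[of n] by (simp add: field_simps)
qed

lemma X02: "real (cnt n (\<lambda>w. \<not> P012 w \<and> 0 \<in> set w \<and> 2 \<in> set w)) = 2^n * (real n / 2 + real n * (real n - 1) / 8) - 2^n + 1"
proof (induction n)
  case 0 then show ?case by (simp add: cnt_0)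
next
  case (Suc n)
  have "cnt (Suc n) (\<lambda>w. \<not> P012 w \<and> 0 \<in> set w \<and> 2 \<in> set w) = cnt n (\<lambda>w. \<not> P12 w \<and> 2 \<in> set w) + cnt n (\<lambda>w. \<not> P012 w \<and> 0 \<in> set w \<and> 2 \<in> set w) + cnt n (\<lambda>w. \<not> P012 w \<and> 0 \<in> set w)"
    by (rule cnt_Suc3) (auto dest: P012_12)
  then show ?case using Suc Y2[of n] X0'[of n] by (simp add: field_simps)
qed

lemma X0: assumes "n \<ge> 1" shows "real (cnt n (\<lambda>w. \<not> P012 w \<and> 0 \<in> set w \<and> 1 \<in> set w \<and> 2 \<in> set w)) = ((real n)^2 / 8 + 3 * real n / 8 - 2) * 2 ^ n + 3"
proof (cases n)
  case 0 then show ?thesis using \<open>n \<ge> 1\<close> by simp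
next
  case (Suc m)
  have "cnt (Suc m) (\<lambda>w. \<not> P012 w \<and> 0 \<in> set w \<and> 1 \<in> set w \<and> 2 \<in> set w) = cnt m (\<lambda>w. \<not> P12 w \<and> 1 \<in> set w \<and> 2 \<in> set w) + cnt m (\<lambda>w. \<not> P012 w \<and> 0 \<in> set w \<and> 2 \<in> set w) + cnt m (\<lambda>w. \<not> P012 w \<and> 0 \<in> set w \<and> 1 \<in> set w)"
    by (rule cnt_Suc3) (auto dest: P012_12)
  then show ?thesis using Suc Y12[of m] X01[of m] X02[of m] by (simp add: field_simps power2_eq_square)
qed

lemma P12_idx: "P12 w \<longleftrightarrow> (\<exists>j k. j<k \<and> k<length w \<and> w!j=1 \<and> w!k=2)"
proof (induction w)
  case Nil show ?case by simp
next
  case (Cons a w)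
  show ?case
  proof
    assume "P12 (a#w)"
    then consider "a=1" "2\<in>set w" | "P12 w" by auto
    then show "\<exists>j k. j<k \<and> k<length (a#w) \<and> (a#w)!j=1 \<and> (a#w)!k=2"
    proof cases
      case 1
      then obtain k where "k<length w" "w!k=2" by (auto simp: in_set_conv_nth)
      then show ?thesis using 1 by (intro exI[of _ 0] exI[of _ "Suc k"]) auto
    next
      case 2
      then obtain j k where "j<k" "k<length w" "w!j=1" "w!k=2" using Cons.IH by auto
      then show ?thesis by (intro exI[of _ "Suc j"] exI[of _ "Suc k"]) auto
    qed
  next
    assume "\<exists>j k. j<k \<and> k<length (a#w) \<and> (a#w)!j=1 \<and> (a#w)!k=2"
    then obtain j k where h: "j<k" "k<length (a#w)" "(a#w)!j=1" "(a#w)!k=2" by blast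
    then obtain k' where k': "k = Suc k'" by (cases k) auto
    show "P12 (a#w)"
    proof (cases j)
      case 0
      then have "a = 1" using h by simp
      moreover have "2 \<in> set w" using h k' by (auto simp: in_set_conv_nth)
      ultimately show ?thesis by simp
    next
      case (Suc j')
      then have "P12 w" using Cons.IH h k' by auto
      then show ?thesis by simp
    qed
  qed
qed

lemma P012_idx: "P012 w \<longleftrightarrow> (\<exists>i j k. i<j \<and> j<k \<and> k<length w \<and> w!i=0 \<and> w!j=1 \<and> w!k=2)"
proof (induction w)
  case Nil show ?case by simp
next
  case (Cons a w)
  show ?case
  proof
    assume "P012 (a#w)"
    then consider "a=0" "P12 w" | "P012 w" by auto
    then show "\<exists>i j k. i<j \<and> j<k \<and> k<length (a#w) \<and> (a#w)!i=0 \<and> (a#w)!j=1 \<and> (a#w)!k=2"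
    proof cases
      case 1
      then obtain j k where "j<k" "k<length w" "w!j=1" "w!k=2" using P12_idx by auto
      then show ?thesis using 1 by (intro exI[of _ 0] exI[of _ "Suc j"] exI[of _ "Suc k"]) auto
    next
      case 2
      then obtain i j k where "i<j" "j<k" "k<length w" "w!i=0" "w!j=1" "w!k=2" using Cons.IH by auto
      then show ?thesis by (intro exI[of _ "Suc i"] exI[of _ "Suc j"] exI[of _ "Suc k"]) auto
    qed
  next
    assume "\<exists>i j k. i<j \<and> j<k \<and> k<length (a#w) \<and> (a#w)!i=0 \<and> (a#w)!j=1 \<and> (a#w)!k=2"
    then obtain i j k where h: "i<j" "j<k" "k<length (a#w)" "(a#w)!i=0" "(a#w)!j=1" "(a#w)!k=2" by blast
    then obtain k' where k': "k = Suc k'" by (cases k) auto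
    obtain j' where j': "j = Suc j'" using h by (cases j) auto
    show "P012 (a#w)"
    proof (cases i)
      case 0
      then have "a = 0" using h by simp
      moreover have "P12 w" unfolding P12_idx using h k' j' by auto
      ultimately show ?thesis by simp
    next
      case (Suc i')
      then have "P012 w" using Cons.IH h k' j' by auto
      then show ?thesis by simp
    qed
  qed
qed

lemma less3: "(a::nat) < 3 \<longleftrightarrow> a = 0 \<or> a = 1 \<or> a = 2" by auto

lemma contains3:
  assumes "length Bs = 3"
  shows "osp_contains Bs [1,2,3] \<longleftrightarrow> (\<exists>x y z. x<y \<and> y<z \<and> x\<in>Bs!0 \<and> y\<in>Bs!1 \<and> z\<in>Bs!2)"
proof
  assume "osp_contains Bs [1,2,3]"
  then obtain idx b :: "nat \<Rightarrow> nat" where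
    h1: "\<forall>j<length [1,2,3::nat]. idx j < length Bs \<and> b j \<in> Bs ! (idx j)" and
    h2: "\<forall>a<length [1,2,3::nat]. \<forall>c<length [1,2,3::nat]. a < c \<longrightarrow> idx a < idx c" and
    h3: "\<forall>a<length [1,2,3::nat]. \<forall>c<length [1,2,3::nat]. b a < b c \<longleftrightarrow> [1,2,3::nat] ! a < [1,2,3] ! c"
    unfolding osp_contains_def by blast
  have "idx 0 < idx 1" "idx 1 < idx 2" "idx 2 < 3" using h1 h2 assms by auto
  then have i: "idx 0 = 0" "idx 1 = 1" "idx 2 = 2" by auto
  have "b 0 < b 1" "b 1 < b 2" using h3 by auto
  moreover have "b 0 \<in> Bs!(idx 0)" "b 1 \<in> Bs!(idx 1)" "b 2 \<in> Bs!(idx 2)" using h1 by auto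
  then have "b 0 \<in> Bs!0" "b 1 \<in> Bs!1" "b 2 \<in> Bs!2" using i by simp_all
  ultimately show "\<exists>x y z. x<y \<and> y<z \<and> x\<in>Bs!0 \<and> y\<in>Bs!1 \<and> z\<in>Bs!2" by blast
next
  assume "\<exists>x y z. x<y \<and> y<z \<and> x\<in>Bs!0 \<and> y\<in>Bs!1 \<and> z\<in>Bs!2"
  then obtain x y z where h: "x<y" "y<z" "x\<in>Bs!0" "y\<in>Bs!1" "z\<in>Bs!2" by blast
  define b where "b = (\<lambda>j::nat. if j = 0 then x else if j = 1 then y else z)"
  show "osp_contains Bs [1,2,3]"
    unfolding osp_contains_def
    apply (rule exI[of _ "\<lambda>j. j"], rule exI[of _ b])
    using h assms by (auto simp: b_def less_Suc_eq numeral_2_eq_2)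
qed


definition S :: "nat list \<Rightarrow> nat \<Rightarrow> nat set" where
  "S w j = {x. 1 \<le> x \<and> x \<le> length w \<and> w!(x-1) = j}"

definition part :: "nat list \<Rightarrow> nat set list" where
  "part w = [S w 0, S w 1, S w 2]"

lemma part_contains: "osp_contains (part w) [1,2,3] \<longleftrightarrow> P012 w"
proof -
  have "osp_contains (part w) [1,2,3] \<longleftrightarrow> (\<exists>x y z. x<y \<and> y<z \<and> x\<in>S w 0 \<and> y\<in>S w 1 \<and> z\<in>S w 2)"
    by (subst contains3) (auto simp: part_def)
  also have "\<dots> \<longleftrightarrow> P012 w"
    unfolding P012_idx
  proof
    assume "\<exists>x y z. x<y \<and> y<z \<and> x\<in>S w 0 \<and> y\<in>S w 1 \<and> z\<in>S w 2"
    then obtain x y z where h: "x<y" "y<z" "x\<in>S w 0" "y\<in>S w 1" "z\<in>S w 2" by blast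
    then show "\<exists>i j k. i<j \<and> j<k \<and> k<length w \<and> w!i=0 \<and> w!j=1 \<and> w!k=2"
      by (intro exI[of _ "x-1"] exI[of _ "y-1"] exI[of _ "z-1"]) (auto simp: S_def)
  next
    assume "\<exists>i j k. i<j \<and> j<k \<and> k<length w \<and> w!i=0 \<and> w!j=1 \<and> w!k=2"
    then obtain i j k where h: "i<j" "j<k" "k<length w" "w!i=0" "w!j=1" "w!k=2" by blast
    then show "\<exists>x y z. x<y \<and> y<z \<and> x\<in>S w 0 \<and> y\<in>S w 1 \<and> z\<in>S w 2"
      by (intro exI[of _ "Suc i"] exI[of _ "Suc j"] exI[of _ "Suc k"]) (auto simp: S_def)
  qed
  finally show ?thesis .
qed

lemma part_inj: "inj_on part {w. length w = n \<and> set w \<subseteq> {0,1,2} \<and> Q w}"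
proof (rule inj_onI)
  fix v w assume v: "v \<in> {w. length w = n \<and> set w \<subseteq> {0,1,2} \<and> Q w}"
    and w: "w \<in> {w. length w = n \<and> set w \<subseteq> {0,1,2} \<and> Q w}" and eq: "part v = part w"
  have S: "S v j = S w j" if "j < 3" for j
    using eq that by (auto simp: part_def less3)
  show "v = w"
  proof (rule nth_equalityI)
    show "length v = length w" using v w by simp
    fix i assume i: "i < length v"
    have "v!i \<in> set v" using i by simp
    then have "v!i < 3" using v by auto
    moreover have "Suc i \<in> S v (v!i)" using i by (simp add: S_def)
    ultimately have "Suc i \<in> S w (v!i)" using S by blast
    then show "v!i = w!i" by (simp add: S_def)
  qed
qed


lemma part_nth: assumes "i < 3" shows "part w ! i = S w i"
proof -
  have "i = 0 \<or> i = 1 \<or> i = 2" using assms by linarith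
  then show ?thesis by (elim disjE) (simp_all add: part_def)
qed

lemma list3: "length xs = 3 \<Longrightarrow> \<exists>a b c. xs = [a,b,c]"
  by (auto simp: numeral_3_eq_3 length_Suc_conv)

lemma part_osp:
  assumes "length w = n" "set w \<subseteq> {0,1,2}" "0 \<in> set w" "1 \<in> set w" "2 \<in> set w"
  shows "part w \<in> ordered_set_partitions n 3"
proof -
  have ne: "S w j \<noteq> {}" if jw: "j \<in> set w" for j
  proof -
    obtain i where "i < length w" "w!i = j" using jw unfolding in_set_conv_nth by blast
    then have "Suc i \<in> S w j" by (simp add: S_def)
    then show ?thesis by blast
  qed
  have un: "S w 0 \<union> S w 1 \<union> S w 2 = {1..n}"
  proof
    show "S w 0 \<union> S w 1 \<union> S w 2 \<subseteq> {1..n}" unfolding S_def using assms(1) by auto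
    show "{1..n} \<subseteq> S w 0 \<union> S w 1 \<union> S w 2"
    proof
      fix x assume x: "x \<in> {1..n}"
      then have x1: "1 \<le> x" "x \<le> n" by auto
      then have "x - 1 < length w" using assms(1) by simp
      then have "w!(x-1) \<in> set w" by (rule nth_mem)
      then have "w!(x-1) \<in> {0,1,2}" using assms(2) by blast
      then have "w!(x-1) = 0 \<or> w!(x-1) = 1 \<or> w!(x-1) = 2" by simp
      then show "x \<in> S w 0 \<union> S w 1 \<union> S w 2" using x1 assms(1) unfolding S_def by auto
    qed
  qed
  have dj: "\<forall>i<3. \<forall>j<3. i \<noteq> j \<longrightarrow> part w ! i \<inter> part w ! j = {}"
  proof (intro allI impI)
    fix i j :: nat assume "i < 3" "j < 3" "i \<noteq> j"
    then have "part w ! i = S w i" "part w ! j = S w j" by (simp_all add: part_nth)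
    moreover have "S w i \<inter> S w j = {}" using \<open>i \<noteq> j\<close> unfolding S_def by blast
    ultimately show "part w ! i \<inter> part w ! j = {}" by simp
  qed
  have l: "length (part w) = 3" by (simp add: part_def)
  have s: "set (part w) = {S w 0, S w 1, S w 2}" by (simp add: part_def)
  have nes: "\<forall>B\<in>set (part w). B \<noteq> {}" unfolding s using ne assms(3-5) by blast
  have u: "\<Union>(set (part w)) = {1..n}" unfolding s using un by auto
  show ?thesis unfolding ordered_set_partitions_def mem_Collect_eq by (intro conjI l nes dj u)
qed

lemma part_image: "{Bs \<in> ordered_set_partitions n 3. \<not> osp_contains Bs [1,2,3]} =
  part ` {w. length w = n \<and> set w \<subseteq> {0,1,2} \<and> (\<not> P012 w \<and> 0 \<in> set w \<and> 1 \<in> set w \<and> 2 \<in> set w)}"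
  (is "?L = part ` ?W")
proof
  show "part ` ?W \<subseteq> ?L"
  proof
    fix Bs assume "Bs \<in> part ` ?W"
    then obtain w where w: "w \<in> ?W" "Bs = part w" by blast
    from w(1) have h: "length w = n" "set w \<subseteq> {0,1,2}" "\<not> P012 w" "0 \<in> set w" "1 \<in> set w" "2 \<in> set w"
      by simp_all
    have "part w \<in> ordered_set_partitions n 3" using h by (intro part_osp)
    moreover have "\<not> osp_contains (part w) [1,2,3]" unfolding part_contains by (rule h(3))
    ultimately show "Bs \<in> ?L" unfolding w(2) by simp
  qed
  show "?L \<subseteq> part ` ?W"
  proof
    fix Bs assume BL: "Bs \<in> ?L"
    then have osp: "Bs \<in> ordered_set_partitions n 3" and nc: "\<not> osp_contains Bs [1,2,3]"
      by simp_all
    have len: "length Bs = 3" and ne: "\<forall>B\<in>set Bs. B \<noteq> {}"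
      and dj: "\<forall>i<3. \<forall>j<3. i \<noteq> j \<longrightarrow> Bs ! i \<inter> Bs ! j = {}"
      and un: "\<Union>(set Bs) = {1..n}"
      using osp unfolding ordered_set_partitions_def mem_Collect_eq by simp_all
    obtain B0 B1 B2 where BsE: "Bs = [B0, B1, B2]" using list3[OF len] by blast
    have un3: "B0 \<union> B1 \<union> B2 = {1..n}" using un unfolding BsE by auto
    have d01: "B0 \<inter> B1 = {}" using dj[rule_format, of 0 1] unfolding BsE by simp
    have d02: "B0 \<inter> B2 = {}" using dj[rule_format, of 0 2] unfolding BsE by simp
    have d12: "B1 \<inter> B2 = {}" using dj[rule_format, of 1 2] unfolding BsE by simp
    have n0: "B0 \<noteq> {}" and n1: "B1 \<noteq> {}" and n2: "B2 \<noteq> {}"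
      using ne unfolding BsE by auto
    define f where "f = (\<lambda>x::nat. if x \<in> B0 then 0 else if x \<in> B1 then 1 else 2::nat)"
    define w where "w = map f [1..<n+1]"
    have lw: "length w = n" by (simp add: w_def)
    have wn: "w!(x-1) = f x" if "1 \<le> x" "x \<le> n" for x
      using that by (simp add: w_def del: upt_Suc)
    have Sgen: "S w j = {x. x \<in> {1..n} \<and> f x = j}" for j
      using wn lw by (auto simp: S_def)
    have S0: "S w 0 = B0" unfolding Sgen using un3 by (auto simp: f_def)
    have S1: "S w 1 = B1" unfolding Sgen using un3 d01 by (auto simp: f_def)
    have S2: "S w 2 = B2" unfolding Sgen using un3 d02 d12 by (auto simp: f_def)
    have pw: "part w = Bs" using S0 S1 S2 BsE by (simp add: part_def)
    have sw: "set w \<subseteq> {0,1,2}" by (auto simp: w_def f_def)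
    have inset: "j \<in> set w" if "S w j \<noteq> {}" for j
    proof -
      from that obtain x where "x \<in> S w j" by blast
      then have "x - 1 < length w" "w!(x-1) = j" by (auto simp: S_def)
      then show ?thesis by (metis nth_mem)
    qed
    have i0: "0 \<in> set w" using inset S0 n0 by simp
    have i1: "1 \<in> set w" using inset S1 n1 by simp
    have i2: "2 \<in> set w" using inset S2 n2 by simp
    have "\<not> P012 w" using nc pw part_contains by metis
    then have "w \<in> ?W" using lw sw i0 i1 i2 by blast
    then show "Bs \<in> part ` ?W" using pw by blast
  qed
qed

theorem theorem2:
  fixes n :: nat
  assumes "n \<ge> 1"
  shows "real (op_count n 3 [1,2,3]) =
           ((real n)^2 / 8 + 3 * real n / 8 - 2) * 2 ^ n + 3"
proof -
  have "op_count n 3 [1,2,3] = card (part ` {w. length w = n \<and> set w \<subseteq> {0,1,2} \<and> (\<not> P012 w \<and> 0 \<in> set w \<and> 1 \<in> set w \<and> 2 \<in> set w)})"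
    unfolding op_count_def part_image ..
  also have "\<dots> = cnt n (\<lambda>w. \<not> P012 w \<and> 0 \<in> set w \<and> 1 \<in> set w \<and> 2 \<in> set w)"
    unfolding cnt_def by (rule card_image[OF part_inj])
  finally show ?thesis using X0[OF assms] by simp
qed

end
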